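(* Let $m\ge1$, $N=2^m$. Then over $\mathbb{F}_2$: (i) $\boldsymbol{G}_N=\boldsymbol{G}_N^{-1}$; (ii) $\mathbf{Q}_{\pi}\boldsymbol{G}_N=(\boldsymbol{G}_N\mathbf{Q}_{\pi})^{-1}$; (iii) $(\boldsymbol{G}_N\mathbf{Q}_{\pi})^2=\mathbf{Q}_{\pi}\boldsymbol{G}_N$; (iv) $\boldsymbol{G}_N\mathbf{Q}_{\pi}\boldsymbol{G}_N=\mathbf{Q}_{\pi}\boldsymbol{G}_N\mathbf{Q}_{\pi}$.
   Context: $\boldsymbol{G}_N=\begin{pmatrix}1&0\\1&1\end{pmatrix}^{\otimes m}$ over $\mathbb{F}_2$ (Kronecker power), indices $0,\dots,N-1$. $\mathbf{Q}_{\pi}$ is the $N\times N$ permutation matrix of the permutation of $[0,N-1]$ swapping $i$ and $N-1-i$ for all $i$. *)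

theory Defs
  imports "Jordan_Normal_Form.Gauss_Jordan_Elimination" "HOL-Library.Z2"
begin

text \<open>Matrices over GF(2) are JNF matrices over the field type bit (HOL-Library.Z2).\<close>

definition kron_mat :: "'a :: times mat \<Rightarrow> 'a mat \<Rightarrow> 'a mat" where
  "kron_mat A B = mat (dim_row A * dim_row B) (dim_col A * dim_col B)
     (\<lambda>(i, j). A $$ (i div dim_row B, j div dim_col B) * B $$ (i mod dim_row B, j mod dim_col B))"

definition F2_kernel :: "bit mat" where
  "F2_kernel = mat 2 2 (\<lambda>(i, j). if j \<le> i then 1 else 0)"

fun polar_G :: "nat \<Rightarrow> bit mat" where
  "polar_G 0 = 1\<^sub>m 1"
| "polar_G (Suc m) = kron_mat F2_kernel (polar_G m)"

definition perm_mat :: "nat \<Rightarrow> (nat \<Rightarrow> nat) \<Rightarrow> bit mat" where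
  "perm_mat n \<pi> = mat n n (\<lambda>(i, j). if j = \<pi> i then 1 else 0)"

definition Q_rev :: "nat \<Rightarrow> bit mat" where
  "Q_rev n = perm_mat n (\<lambda>i. n - 1 - i)"

end

theory Submission
  imports Defs
begin

lemma sum_divmod:
  fixes f :: "nat \<Rightarrow> nat \<Rightarrow> 'a::comm_monoid_add"
  shows "(\<Sum>k<b*q. f (k div q) (k mod q)) = (\<Sum>x<b. \<Sum>y<q. f x y)"
proof (cases "q = 0")
  case True then show ?thesis by simp
next
  case False
  have "(\<Sum>k<b*q. f (k div q) (k mod q)) = (\<Sum>x<b. \<Sum>k\<in>{x*q..<x*q+q}. f (k div q) (k mod q))"
    by (rule sum.nat_group[symmetric])
  also have "\<dots> = (\<Sum>x<b. \<Sum>y<q. f x y)"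
  proof (rule sum.cong[OF refl])
    fix x
    have "(\<Sum>k\<in>{x*q..<x*q+q}. f (k div q) (k mod q)) = (\<Sum>y\<in>{0..<q}. f ((y + x*q) div q) ((y + x*q) mod q))"
      by (subst sum.shift_bounds_nat_ivl[symmetric]) (simp add: add.commute)
    also have "\<dots> = (\<Sum>y\<in>{0..<q}. f x y)"
      by (rule sum.cong[OF refl]) (use False in simp)
    finally show "(\<Sum>k\<in>{x*q..<x*q+q}. f (k div q) (k mod q)) = (\<Sum>y<q. f x y)"
      by (simp add: atLeast0LessThan)
  qed
  finally show ?thesis .
qed

lemma kron_carrier: "A \<in> carrier_mat a b \<Longrightarrow> B \<in> carrier_mat p q \<Longrightarrow> kron_mat A B \<in> carrier_mat (a*p) (b*q)"
  by (auto simp: kron_mat_def)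

lemma kron_index: "i < dim_row A * dim_row B \<Longrightarrow> j < dim_col A * dim_col B \<Longrightarrow>
  kron_mat A B $$ (i,j) = A $$ (i div dim_row B, j div dim_col B) * B $$ (i mod dim_row B, j mod dim_col B)"
  by (simp add: kron_mat_def)

lemma kron_mult:
  fixes A :: "'a::comm_semiring_0 mat"
  assumes A: "A \<in> carrier_mat a b" and C: "C \<in> carrier_mat b c"
    and B: "B \<in> carrier_mat p q" and D: "D \<in> carrier_mat q r"
  shows "kron_mat A B * kron_mat C D = kron_mat (A * C) (B * D)"
proof (rule eq_matI)
  show "dim_row (kron_mat A B * kron_mat C D) = dim_row (kron_mat (A * C) (B * D))"
    using A B C D by (simp add: kron_mat_def)
  show "dim_col (kron_mat A B * kron_mat C D) = dim_col (kron_mat (A * C) (B * D))"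
    using A B C D by (simp add: kron_mat_def)
  fix i j assume i: "i < dim_row (kron_mat (A * C) (B * D))" and j: "j < dim_col (kron_mat (A * C) (B * D))"
  then have i': "i < a*p" and j': "j < c*r" using A B C D by (auto simp: kron_mat_def)
  have pp: "p > 0" using i' by (cases p) auto
  have rr: "r > 0" using j' by (cases r) auto
  have id: "i div p < a" "i mod p < p" "j div r < c" "j mod r < r"
    using i' j' pp rr by (auto simp: less_mult_imp_div_less mult.commute)
  have "(kron_mat A B * kron_mat C D) $$ (i,j) = (\<Sum>k<b*q. kron_mat A B $$ (i,k) * kron_mat C D $$ (k,j))"
    using A B C D i' j' by (simp add: kron_mat_def scalar_prod_def atLeast0LessThan)
  also have "\<dots> = (\<Sum>k<b*q. (A $$ (i div p, k div q) * C $$ (k div q, j div r)) * (B $$ (i mod p, k mod q) * D $$ (k mod q, j mod r)))"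
    using A B C D i' j' by (intro sum.cong refl) (simp add: kron_mat_def ac_simps)
  also have "\<dots> = (\<Sum>x<b. \<Sum>y<q. (A $$ (i div p, x) * C $$ (x, j div r)) * (B $$ (i mod p, y) * D $$ (y, j mod r)))"
    by (rule sum_divmod)
  also have "\<dots> = (\<Sum>x<b. A $$ (i div p, x) * C $$ (x, j div r)) * (\<Sum>y<q. B $$ (i mod p, y) * D $$ (y, j mod r))"
    by (rule sum_product[symmetric])
  also have "\<dots> = kron_mat (A * C) (B * D) $$ (i,j)"
    using A B C D i' j' id by (simp add: kron_mat_def scalar_prod_def atLeast0LessThan)
  finally show "(kron_mat A B * kron_mat C D) $$ (i,j) = kron_mat (A * C) (B * D) $$ (i,j)" .
qed

lemma mat_inverse_eqI:
  fixes A :: "'a::field mat"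
  assumes A: "A \<in> carrier_mat n n" and B: "B \<in> carrier_mat n n"
    and AB: "A * B = 1\<^sub>m n" and BA: "B * A = 1\<^sub>m n"
  shows "mat_inverse A = Some B"
proof (cases "mat_inverse A")
  case None
  from mat_inverse(1)[OF A None, of undefined] have "A \<notin> Units (ring_mat TYPE('a) n undefined)" .
  moreover have "A \<in> Units (ring_mat TYPE('a) n undefined)"
    using A B AB BA by (auto simp: Units_def ring_mat_def)
  ultimately show ?thesis by blast
next
  case (Some C)
  from mat_inverse(2)[OF A Some] have CA: "C * A = 1\<^sub>m n" and C: "C \<in> carrier_mat n n" by auto
  have "C = C * (A * B)" using C AB by simp
  also have "\<dots> = (C * A) * B" using A B C by (simp add: assoc_mult_mat)
  also have "\<dots> = B" using CA B by simp
  finally show ?thesis using Some by simp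
qed

lemma less2: "(i::nat) < 2 \<Longrightarrow> i = 0 \<or> i = 1" by auto

lemma F_carrier: "F2_kernel \<in> carrier_mat 2 2" by (simp add: F2_kernel_def)
lemma Q_carrier: "Q_rev n \<in> carrier_mat n n" by (simp add: Q_rev_def perm_mat_def)
lemma G_carrier: "polar_G m \<in> carrier_mat (2^m) (2^m)"
  by (induction m) (auto simp: kron_mat_def F2_kernel_def)

lemma sum2: "(\<Sum>i\<in>{0..<2::nat}. f i) = f 0 + f 1" by (simp add: numeral_2_eq_2)

lemma FF: "F2_kernel * F2_kernel = 1\<^sub>m 2"
  apply (rule eq_matI)
  apply (auto dest!: less2 simp: F2_kernel_def)
  apply (simp_all add: scalar_prod_def sum2)
  done
lemma QQ2: "Q_rev 2 * Q_rev 2 = 1\<^sub>m 2"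
  apply (rule eq_matI)
  apply (auto dest!: less2 simp: Q_rev_def perm_mat_def)
  apply (simp_all add: scalar_prod_def sum2)
  done
lemma FQF: "F2_kernel * Q_rev 2 * F2_kernel = Q_rev 2 * F2_kernel * Q_rev 2"
  apply (rule eq_matI)
  apply (auto dest!: less2 simp: F2_kernel_def Q_rev_def perm_mat_def)
  apply (simp_all add: scalar_prod_def sum2)
  done

lemma kron_one: "kron_mat (1\<^sub>m a) (1\<^sub>m b :: 'a::semiring_1 mat) = 1\<^sub>m (a*b)"
proof (rule eq_matI)
  fix i j assume "i < dim_row (1\<^sub>m (a*b) :: 'a mat)" "j < dim_col (1\<^sub>m (a*b) :: 'a mat)"
  then have i: "i < a*b" and j: "j < a*b" by auto
  then have b: "b > 0" by (cases b) auto
  have "i div b < a" "j div b < a" using i j by (auto simp: less_mult_imp_div_less)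
  moreover have "(i div b = j div b \<and> i mod b = j mod b) = (i = j)"
    by (metis div_mult_mod_eq)
  ultimately show "kron_mat (1\<^sub>m a) (1\<^sub>m b) $$ (i, j) = (1\<^sub>m (a*b) :: 'a mat) $$ (i, j)"
    using i j b by (auto simp: kron_mat_def)
qed (auto simp: kron_mat_def)

lemma Q_kron: assumes "n > 0" shows "Q_rev (2*n) = kron_mat (Q_rev 2) (Q_rev n)"
proof (rule eq_matI)
  fix i j assume "i < dim_row (kron_mat (Q_rev 2) (Q_rev n))" "j < dim_col (kron_mat (Q_rev 2) (Q_rev n))"
  then have i: "i < 2*n" and j: "j < 2*n" by (auto simp: kron_mat_def Q_rev_def perm_mat_def)
  have "(j = 2*n - 1 - i) = (j div n = 1 - i div n \<and> j mod n = n - 1 - i mod n)"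
  proof (cases "i < n")
    case True
    then show ?thesis using j assms
      by (cases "j < n") (auto simp: div_if mod_if)
  next
    case False
    then show ?thesis using i j assms
      by (cases "j < n") (auto simp: div_if mod_if)
  qed
  then show "Q_rev (2*n) $$ (i,j) = kron_mat (Q_rev 2) (Q_rev n) $$ (i,j)"
    using i j assms by (auto simp: kron_mat_def Q_rev_def perm_mat_def less_mult_imp_div_less mult.commute)
qed (auto simp: kron_mat_def Q_rev_def perm_mat_def)

lemma main:
  "polar_G m * polar_G m = 1\<^sub>m (2^m) \<and> Q_rev (2^m) * Q_rev (2^m) = 1\<^sub>m (2^m)
   \<and> polar_G m * Q_rev (2^m) * polar_G m = Q_rev (2^m) * polar_G m * Q_rev (2^m)"
proof (induction m)
  case 0
  have "Q_rev 1 = 1\<^sub>m 1" by (rule eq_matI) (auto simp: Q_rev_def perm_mat_def)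
  then show ?case by simp
next
  case (Suc m)
  let ?G = "polar_G m" and ?Q = "Q_rev (2^m)" and ?F = F2_kernel and ?P = "Q_rev 2"
  have G: "?G \<in> carrier_mat (2^m) (2^m)" by (rule G_carrier)
  have Q: "?Q \<in> carrier_mat (2^m) (2^m)" by (rule Q_carrier)
  have F: "?F \<in> carrier_mat 2 2" by (rule F_carrier)
  have P: "?P \<in> carrier_mat 2 2" by (rule Q_carrier)
  have QS: "Q_rev (2^Suc m) = kron_mat ?P ?Q" using Q_kron[of "2^m"] by simp
  have GS: "polar_G (Suc m) = kron_mat ?F ?G" by simp
  have 1: "polar_G (Suc m) * polar_G (Suc m) = 1\<^sub>m (2^Suc m)"
    unfolding GS kron_mult[OF F F G G] FF using Suc.IH kron_one[of 2 "2^m"] by simp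
  have 2: "Q_rev (2^Suc m) * Q_rev (2^Suc m) = 1\<^sub>m (2^Suc m)"
    unfolding QS kron_mult[OF P P Q Q] QQ2 using Suc.IH kron_one[of 2 "2^m"] by simp
  have FP: "?F * ?P \<in> carrier_mat 2 2" "?P * ?F \<in> carrier_mat 2 2" using F P by auto
  have GQ: "?G * ?Q \<in> carrier_mat (2^m) (2^m)" "?Q * ?G \<in> carrier_mat (2^m) (2^m)" using G Q by auto
  have 3: "polar_G (Suc m) * Q_rev (2^Suc m) * polar_G (Suc m)
        = Q_rev (2^Suc m) * polar_G (Suc m) * Q_rev (2^Suc m)"
    unfolding GS QS kron_mult[OF F P G Q] kron_mult[OF P F Q G] kron_mult[OF FP(1) F GQ(1) G]
      kron_mult[OF FP(2) P GQ(2) Q] FQF using Suc.IH by simp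
  show ?case using 1 2 3 by blast
qed

lemma assoc3: "A \<in> carrier_mat n n \<Longrightarrow> B \<in> carrier_mat n n \<Longrightarrow> C \<in> carrier_mat n n \<Longrightarrow>
  A * B * C = A * (B * C)" for A B C :: "'a::semiring_0 mat"
  by (rule assoc_mult_mat)

lemma mult_cl: "A \<in> carrier_mat n n \<Longrightarrow> B \<in> carrier_mat n n \<Longrightarrow> A * B \<in> carrier_mat n n"
  for A B :: "'a::semiring_0 mat"
  by (rule mult_carrier_mat)

theorem lemma2:
  fixes m :: nat
  assumes "m \<ge> 1"
  defines "N \<equiv> 2 ^ m"
  shows "mat_inverse (polar_G m) = Some (polar_G m)
    \<and> mat_inverse (polar_G m * Q_rev N) = Some (Q_rev N * polar_G m)
    \<and> (polar_G m * Q_rev N) * (polar_G m * Q_rev N) = Q_rev N * polar_G m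
    \<and> polar_G m * Q_rev N * polar_G m = Q_rev N * polar_G m * Q_rev N"
proof -
  have G: "polar_G m \<in> carrier_mat N N" unfolding N_def by (rule G_carrier)
  have Q: "Q_rev N \<in> carrier_mat N N" by (rule Q_carrier)
  from main[of m] have GG: "polar_G m * polar_G m = 1\<^sub>m N" and QQ: "Q_rev N * Q_rev N = 1\<^sub>m N"
    and GQG: "polar_G m * Q_rev N * polar_G m = Q_rev N * polar_G m * Q_rev N"
    unfolding N_def by auto
  have i1: "mat_inverse (polar_G m) = Some (polar_G m)"
    using mat_inverse_eqI[OF G G GG GG] .
  have "(polar_G m * Q_rev N) * (Q_rev N * polar_G m) = polar_G m * (Q_rev N * Q_rev N) * polar_G m"
    using G Q by (simp add: assoc3 mult_cl)
  also have "\<dots> = 1\<^sub>m N" using QQ GG G by simp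
  finally have a: "(polar_G m * Q_rev N) * (Q_rev N * polar_G m) = 1\<^sub>m N" .
  have "(Q_rev N * polar_G m) * (polar_G m * Q_rev N) = Q_rev N * (polar_G m * polar_G m) * Q_rev N"
    using G Q by (simp add: assoc3 mult_cl)
  also have "\<dots> = 1\<^sub>m N" using QQ GG Q by simp
  finally have b: "(Q_rev N * polar_G m) * (polar_G m * Q_rev N) = 1\<^sub>m N" .
  have i2: "mat_inverse (polar_G m * Q_rev N) = Some (Q_rev N * polar_G m)"
    using mat_inverse_eqI[OF _ _ a b] G Q by auto
  have "(polar_G m * Q_rev N) * (polar_G m * Q_rev N) = (polar_G m * Q_rev N * polar_G m) * Q_rev N"
    using G Q by (simp add: assoc3 mult_cl)
  also have "\<dots> = (Q_rev N * polar_G m) * (Q_rev N * Q_rev N)"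
    unfolding GQG using G Q by (simp add: assoc3 mult_cl)
  also have "\<dots> = Q_rev N * polar_G m" using QQ G Q by simp
  finally have i3: "(polar_G m * Q_rev N) * (polar_G m * Q_rev N) = Q_rev N * polar_G m" .
  show ?thesis using i1 i2 i3 GQG by blast
qed

end
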